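(* Let $n\ge 1$, identify $\mathbb{R}^{n+1}=\mathbb{R}^n\times\mathbb{R}$, let $f\colon\mathbb{R}^n\to\mathbb{R}$ be continuous with epigraph $L=\{(x,y)\mid f(x)\le y\}$, and let $K\subset\mathbb{R}^{n+1}$ be a nonempty closed set with $K\cap L=\emptyset$. Suppose there is a point $(x_*,y_* )\in K$ such that $y_*<f(x)$ for all $x\in\mathbb{R}^n$. Then for every $x\in\mathbb{R}^n$ there exists $y\in\mathbb{R}$ with $d((x,y),K)=d((x,y),L)$, and every such equidistant point $(x,y)$ satisfies $$\min\left\{\frac{|x-x_*|^2+y_*^2-u^2}{2(y_*-u)},\,y_*\right\}\le y<f(x),\qquad\text{where } u=\min\{f(s)\mid s\in\mathbb{R}^n,\ |x-s|\le|x-x_*|\}.$$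
   Context: For $A\subset\mathbb{R}^{m}$ and $p\in\mathbb{R}^m$, $d(p,A)=\inf\{|p-q|\mid q\in A\}$ with the Euclidean norm. A point $p$ is called equidistant (for $K$ and $L$) if $d(p,K)=d(p,L)$. *)

theory Defs
  imports "HOL-Analysis.Analysis"
begin

end

theory Submission
  imports Defs
begin

lemma epi_closed:
  fixes f :: "real^'n \<Rightarrow> real"
  assumes "continuous_on UNIV f"
  shows "closed {(s, t). f s \<le> t}"
proof -
  have "{(s, t). f s \<le> t} = {p. (f \<circ> fst) p \<le> snd p}" by auto
  moreover have "closed {p. (f \<circ> fst) p \<le> snd p}"
    by (intro closed_Collect_le continuous_on_compose continuous_intros continuous_on_subset[OF assms]) auto
  ultimately show ?thesis by simp
qed

lemma key:
  fixes f :: "real^'n \<Rightarrow> real" and K :: "((real^'n) \<times> real) set"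
    and xs :: "real^'n" and ys :: real
  assumes cf: "continuous_on UNIV f"
    and "(xs, ys) \<in> K"
    and fb: "\<forall>x. ys < f x"
    and ud: "u = Inf (f ` cball x (norm (x - xs)))"
    and y1: "y < ys"
    and y2: "y < (norm (x - xs)^2 + ys^2 - u^2) / (2 * (ys - u))"
  shows "infdist (x, y) K < infdist (x, y) {(s, t). f s \<le> t}"
proof -
  define r where "r = norm (x - xs)"
  define L where "L = {(s, t). f s \<le> t}"
  have Lc: "closed L" unfolding L_def by (rule epi_closed[OF cf])
  have Lne: "L \<noteq> {}" unfolding L_def by auto
  obtain s0 where s0: "s0 \<in> cball x r" "\<forall>s\<in>cball x r. f s0 \<le> f s"
    using continuous_attains_inf[of "cball x r" f] continuous_on_subset[OF cf]
    by (metis centre_in_cball compact_cball empty_iff norm_ge_zero r_def subset_UNIV)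
  have u: "u = f s0" unfolding ud r_def[symmetric]
    by (rule cInf_eq_minimum) (use s0 in auto)
  have uys: "ys < u" using u fb by simp
  have ulow: "\<And>s. s \<in> cball x r \<Longrightarrow> u \<le> f s" using s0 u by auto
  define D where "D = sqrt (r^2 + (y - ys)^2)"
  have dK: "infdist (x, y) K \<le> D"
  proof -
    have "infdist (x, y) K \<le> dist (x, y) (xs, ys)" by (rule infdist_le[OF assms(2)])
    also have "\<dots> = D" unfolding D_def r_def dist_Pair_Pair dist_norm[of x xs] dist_real_def power2_abs ..
    finally show ?thesis .
  qed
  have N: "norm (x - xs)^2 + ys^2 - u^2 < y * (2 * (ys - u))"
    using y2 uys by (simp add: less_divide_eq)
  have uy: "r^2 + (y - ys)^2 < (u - y)^2"
    using N unfolding r_def by (simp add: power2_eq_square algebra_simps)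
  obtain p where p: "p \<in> L" "infdist (x, y) L = dist (x, y) p"
    using infdist_attains_inf[OF Lc Lne] by blast
  obtain s t where st: "p = (s, t)" by (cases p)
  have fst: "f s \<le> t" using p st unfolding L_def by auto
  have dp: "dist (x, y) p = sqrt ((norm (x - s))^2 + (y - t)^2)"
    unfolding st dist_Pair_Pair dist_norm[of x s] dist_real_def power2_abs ..
  have "D < dist (x, y) p"
  proof (cases "norm (x - s) \<le> r")
    case True
    then have "s \<in> cball x r" by (simp add: dist_norm)
    then have "u \<le> t" using ulow fst by fastforce
    then have "(u - y)^2 \<le> (t - y)^2" using uys y1 by (intro power_mono) auto
    then have "(u - y)^2 \<le> (y - t)^2" by (simp add: power2_commute)
    then have "r^2 + (y - ys)^2 < (norm (x - s))^2 + (y - t)^2"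
      using uy zero_le_power2[of "norm (x - s)"] by linarith
    then show ?thesis unfolding D_def dp by (rule real_sqrt_less_mono)
  next
    case False
    have "ys < t" using fb fst by (smt (verit))
    then have "(ys - y)^2 \<le> (t - y)^2" using y1 by (intro power_mono) auto
    then have "(y - ys)^2 \<le> (y - t)^2" by (simp add: power2_commute)
    moreover have "r^2 < (norm (x - s))^2" using False
      by (simp add: r_def power_strict_mono)
    ultimately have "r^2 + (y - ys)^2 < (norm (x - s))^2 + (y - t)^2" by simp
    then show ?thesis unfolding D_def dp by (rule real_sqrt_less_mono)
  qed
  then show ?thesis using dK p unfolding L_def by simp
qed

theorem lemma1:
  fixes f :: "real^'n \<Rightarrow> real" and K :: "((real^'n) \<times> real) set"
    and xs :: "real^'n" and ys :: real
  assumes "continuous_on UNIV f"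
    and "closed K" and "K \<noteq> {}"
    and "K \<inter> {(x, y). f x \<le> y} = {}"
    and "(xs, ys) \<in> K"
    and "\<forall>x. ys < f x"
  shows "\<forall>x. (\<exists>y. infdist (x, y) K = infdist (x, y) {(s, t). f s \<le> t})
           \<and> (\<forall>y. infdist (x, y) K = infdist (x, y) {(s, t). f s \<le> t} \<longrightarrow>
               (let u = Inf (f ` cball x (norm (x - xs)))
                in min ((norm (x - xs)^2 + ys^2 - u^2) / (2 * (ys - u))) ys \<le> y \<and> y < f x))"
proof (intro allI conjI impI)
  fix x
  define L where "L = {(s, t). f s \<le> t}"
  have Lc: "closed L" unfolding L_def by (rule epi_closed[OF assms(1)])
  have Lne: "L \<noteq> {}" unfolding L_def by auto
  define u where "u = Inf (f ` cball x (norm (x - xs)))"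
  define A where "A = (norm (x - xs)^2 + ys^2 - u^2) / (2 * (ys - u))"
  have top: "infdist (x, y) L < infdist (x, y) K" if "f x \<le> y" for y
  proof -
    have "(x, y) \<in> L" using that unfolding L_def by simp
    then have "infdist (x, y) L = 0" using in_closed_iff_infdist_zero[OF Lc Lne] by simp
    moreover have "(x, y) \<notin> K" using \<open>(x, y) \<in> L\<close> assms(4) unfolding L_def by auto
    then have "infdist (x, y) K \<noteq> 0" using in_closed_iff_infdist_zero[OF assms(2,3)] by simp
    ultimately show ?thesis using infdist_nonneg[of "(x,y)" K] by simp
  qed
  have bot: "infdist (x, y) K < infdist (x, y) L" if "y < min A ys" for y
    using key[OF assms(1,5,6) u_def, of y] that unfolding A_def L_def by simp
  {
    define y0 where "y0 = min A ys - 1"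
    have y0f: "y0 \<le> f x" using assms(6) unfolding y0_def by (smt (verit))
    let ?g = "\<lambda>y. infdist (x, y) K - infdist (x, y) L"
    have "y0 < min A ys" unfolding y0_def by (simp add: min_def)
    then have "?g y0 \<le> 0" using bot[of y0] by (simp add: less_imp_le)
    moreover have "0 \<le> ?g (f x)" using top[of "f x"] by simp
    moreover have "continuous_on {y0..f x} ?g"
      by (intro continuous_intros continuous_on_infdist)
    ultimately obtain y where "?g y = 0" using IVT'[of ?g y0 0 "f x", OF _ _ y0f] by blast
    then show "\<exists>y. infdist (x, y) K = infdist (x, y) {(s, t). f s \<le> t}"
      unfolding L_def by auto
  }
  fix y
  assume eq: "infdist (x, y) K = infdist (x, y) {(s, t). f s \<le> t}"
  have "min A ys \<le> y" using bot[of y] eq unfolding L_def by force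
  moreover have "y < f x" using top[of y] eq unfolding L_def by force
  ultimately show "let u = Inf (f ` cball x (norm (x - xs)))
                in min ((norm (x - xs)^2 + ys^2 - u^2) / (2 * (ys - u))) ys \<le> y \<and> y < f x"
    unfolding Let_def u_def[symmetric] A_def[symmetric] by simp
qed

end
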